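(* Let $G$ be a graph, $B\subseteq V(G)$ and $\ell\ge 1$. Then $B$ is an $\ell$-edge-leaky forcing set of $G$ if and only if $B$ is an $(\ell-1)$-leaky forcing set of $G$ such that for every set $L\subseteq V(G)$ of $\ell-1$ vertex leaks and every $v\in V(G)\setminus B$ there exist forces $x\to v$ and $y\to v$ in $\mathcal{F}_L(B)$ with $x\neq y$.
   Context: All graphs are finite, simple and undirected. Zero forcing: a blue vertex $u$ with exactly one white neighbor $w$ may force $w$ (color it blue), written $u\to w$. From an initial blue set $B$, a forcing sequence is a chronologically ordered list of forces each valid when performed. A vertex leak is a vertex not allowed to perform any force. $B$ is an $\ell$-leaky forcing set if for every set $L\subseteq V(G)$ of at most $\ell$ vertex leaks, exhaustively applying the forcing rule from $B$ with no vertex of $L$ forcing colors all of $V(G)$ blue (a $0$-leaky forcing set is a zero forcing set). For $L\subseteq V(G)$, $\mathcal{F}_L(B)$ is the set of all forces $x\to v$ that occur in some forcing sequence from $B$ in which no vertex of $L$ performs a force. An edge leak is an edge $xy\in E(G)$ across which no force may be performed (neither $x\to y$ nor $y\to x$). $B$ is an $\ell$-edge-leaky forcing set if for every set of at most $\ell$ edge leaks, exhaustively applying the forcing rule from $B$ without forcing across leak edges colors all of $V(G)$ blue. *)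

theory Defs
  imports Main
begin

definition simple_graph :: "'a set \<Rightarrow> ('a \<Rightarrow> 'a \<Rightarrow> bool) \<Rightarrow> bool" where
  "simple_graph V E \<longleftrightarrow> finite V \<and> (\<forall>x y. E x y \<longrightarrow> E y x) \<and> (\<forall>x. \<not> E x x)
     \<and> (\<forall>x y. E x y \<longrightarrow> x \<in> V \<and> y \<in> V)"

definition graph_edges :: "'a set \<Rightarrow> ('a \<Rightarrow> 'a \<Rightarrow> bool) \<Rightarrow> 'a set set" where
  "graph_edges V E = {{x, y} | x y. x \<in> V \<and> y \<in> V \<and> E x y}"

text \<open>A force u -> w is valid for current blue set S, where Ok u w says whether the
  force is permitted (encodes vertex leaks / edge leaks): u is blue, w is the unique
  white neighbour of u.\<close>
definition valid_force ::
  "'a set \<Rightarrow> ('a \<Rightarrow> 'a \<Rightarrow> bool) \<Rightarrow> ('a \<Rightarrow> 'a \<Rightarrow> bool) \<Rightarrow> 'a set \<Rightarrow> 'a \<Rightarrow> 'a \<Rightarrow> bool" where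
  "valid_force V E Ok S u w \<longleftrightarrow> u \<in> S \<and> w \<in> V \<and> w \<notin> S \<and> E u w \<and> Ok u w
     \<and> (\<forall>x\<in>V. E u x \<and> x \<notin> S \<longrightarrow> x = w)"

fun forcing_seq ::
  "'a set \<Rightarrow> ('a \<Rightarrow> 'a \<Rightarrow> bool) \<Rightarrow> ('a \<Rightarrow> 'a \<Rightarrow> bool) \<Rightarrow> 'a set \<Rightarrow> ('a \<times> 'a) list \<Rightarrow> bool" where
  "forcing_seq V E Ok S [] = True"
| "forcing_seq V E Ok S ((u, w) # fs) \<longleftrightarrow> valid_force V E Ok S u w \<and> forcing_seq V E Ok (insert w S) fs"

definition final_blue :: "'a set \<Rightarrow> ('a \<times> 'a) list \<Rightarrow> 'a set" where
  "final_blue B fs = B \<union> snd ` set fs"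

definition forces_all ::
  "'a set \<Rightarrow> ('a \<Rightarrow> 'a \<Rightarrow> bool) \<Rightarrow> ('a \<Rightarrow> 'a \<Rightarrow> bool) \<Rightarrow> 'a set \<Rightarrow> bool" where
  "forces_all V E Ok B \<longleftrightarrow>
     (\<forall>fs. forcing_seq V E Ok B fs \<and> (\<nexists>u w. valid_force V E Ok (final_blue B fs) u w)
        \<longrightarrow> final_blue B fs = V)"

definition leaky_forcing_set :: "'a set \<Rightarrow> ('a \<Rightarrow> 'a \<Rightarrow> bool) \<Rightarrow> nat \<Rightarrow> 'a set \<Rightarrow> bool" where
  "leaky_forcing_set V E l B \<longleftrightarrow>
     (\<forall>L. L \<subseteq> V \<and> card L \<le> l \<longrightarrow> forces_all V E (\<lambda>u w. u \<notin> L) B)"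

definition edge_leaky_forcing_set :: "'a set \<Rightarrow> ('a \<Rightarrow> 'a \<Rightarrow> bool) \<Rightarrow> nat \<Rightarrow> 'a set \<Rightarrow> bool" where
  "edge_leaky_forcing_set V E l B \<longleftrightarrow>
     (\<forall>F. F \<subseteq> graph_edges V E \<and> card F \<le> l \<longrightarrow> forces_all V E (\<lambda>u w. {u, w} \<notin> F) B)"

text \<open>F_L(B): all forces occurring in some forcing sequence from B where no vertex of L forces.\<close>
definition forces_set :: "'a set \<Rightarrow> ('a \<Rightarrow> 'a \<Rightarrow> bool) \<Rightarrow> 'a set \<Rightarrow> 'a set \<Rightarrow> ('a \<times> 'a) set" where
  "forces_set V E L B = {(x, v). \<exists>fs. forcing_seq V E (\<lambda>u w. u \<notin> L) B fs \<and> (x, v) \<in> set fs}"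

end

theory Submission
  imports Defs
begin

lemma fb_Cons[simp]: "final_blue S ((u,w)#fs) = final_blue (insert w S) fs"
  by (auto simp: final_blue_def)

lemma fb_Nil[simp]: "final_blue S [] = S" by (simp add: final_blue_def)

lemma fb_sub: "S \<subseteq> final_blue S fs" by (auto simp: final_blue_def)

lemma seq_append:
  "forcing_seq V E Ok S (fs @ gs) \<longleftrightarrow> forcing_seq V E Ok S fs \<and> forcing_seq V E Ok (final_blue S fs) gs"
proof (induction fs arbitrary: S)
  case Nil then show ?case by simp
next
  case (Cons p fs) then show ?case by (cases p) auto
qed

lemma seq_mono:
  "forcing_seq V E Ok S fs \<Longrightarrow> \<forall>(u,w)\<in>set fs. Ok' u w \<Longrightarrow> forcing_seq V E Ok' S fs"
proof (induction fs arbitrary: S)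
  case Nil then show ?case by simp
next
  case (Cons p fs) then show ?case by (cases p) (auto simp: valid_force_def)
qed

lemma seq_forced_notin:
  "forcing_seq V E Ok S fs \<Longrightarrow> (x,v)\<in>set fs \<Longrightarrow> v \<notin> S"
proof (induction fs arbitrary: S)
  case Nil then show ?case by simp
next
  case (Cons p fs) then show ?case by (cases p) (auto simp: valid_force_def)
qed

lemma seq_edge:
  "forcing_seq V E Ok S fs \<Longrightarrow> (x,v)\<in>set fs \<Longrightarrow>
     E x v \<and> Ok x v \<and> v \<in> V \<and> x \<in> final_blue S fs \<and> v \<in> final_blue S fs"
proof (induction fs arbitrary: S)
  case Nil then show ?case by simp
next
  case (Cons p fs)
  obtain a b where p: "p = (a,b)" by (cases p)
  show ?case
  proof (cases "(x,v) = (a,b)")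
    case True
    then show ?thesis using Cons.prems p fb_sub[of "insert b S" fs]
      by (auto simp: valid_force_def)
  next
    case False
    then show ?thesis using Cons p by auto
  qed
qed

lemma seq_in_V:
  "forcing_seq V E Ok S fs \<Longrightarrow> S \<subseteq> V \<Longrightarrow> final_blue S fs \<subseteq> V"
proof (induction fs arbitrary: S)
  case Nil then show ?case by simp
next
  case (Cons p fs) then show ?case by (cases p) (auto simp: valid_force_def)
qed

lemma seq_forcer_nbrs:
  "forcing_seq V E Ok S fs \<Longrightarrow> (u,w)\<in>set fs \<Longrightarrow> y \<in> V \<Longrightarrow> E u y \<Longrightarrow> y \<in> final_blue S fs"
proof (induction fs arbitrary: S)
  case Nil then show ?case by simp
next
  case (Cons p fs)
  obtain a b where p: "p = (a,b)" by (cases p)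
  show ?case
  proof (cases "(u,w) = (a,b)")
    case True
    then have "y \<in> insert b S" using Cons.prems p by (auto simp: valid_force_def)
    then show ?thesis using p fb_sub[of "insert b S" fs] by auto
  next
    case False
    then show ?thesis using Cons p by auto
  qed
qed

lemma exists_max:
  "finite V \<Longrightarrow> \<exists>fs. forcing_seq V E Ok S fs \<and> \<not>(\<exists>u w. valid_force V E Ok (final_blue S fs) u w)"
proof (induction "card (V - S)" arbitrary: S rule: less_induct)
  case less
  show ?case
  proof (cases "\<exists>u w. valid_force V E Ok S u w")
    case False then show ?thesis by (intro exI[of _ "[]"]) simp
  next
    case True
    then obtain u w where vf: "valid_force V E Ok S u w" by blast
    hence wV: "w \<in> V - S" by (simp add: valid_force_def)
    have "V - insert w S = (V - S) - {w}" by auto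
    hence "card (V - insert w S) < card (V - S)" using less.prems wV
      by (metis card_Diff1_less finite_Diff)
    then obtain fs where "forcing_seq V E Ok (insert w S) fs \<and>
        \<not>(\<exists>u w'. valid_force V E Ok (final_blue (insert w S) fs) u w')"
      using less.hyps less.prems by blast
    then show ?thesis using vf by (intro exI[of _ "(u,w)#fs"]) simp
  qed
qed

lemma exit_force:
  assumes "forcing_seq V E Ok T fs" "T \<subseteq> S" "(x, v0) \<in> set fs" "v0 \<notin> S"
    "\<forall>z t. valid_force V E Ok S z t \<longrightarrow> z = u0 \<and> t = v0"
  shows "x = u0"
  using assms
proof (induction fs arbitrary: T)
  case Nil then show ?case by simp
next
  case (Cons p fs)
  obtain a b where p: "p = (a,b)" by (cases p)
  have vf: "valid_force V E Ok T a b" and rest: "forcing_seq V E Ok (insert b T) fs"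
    using Cons.prems p by auto
  show ?case
  proof (cases "b \<in> S")
    case True
    then have "insert b T \<subseteq> S" using Cons.prems by auto
    moreover have "(x,v0) \<in> set fs" using Cons.prems p True by auto
    ultimately show ?thesis using Cons.IH[OF rest] Cons.prems(4,5) by blast
  next
    case False
    have "valid_force V E Ok S a b" using vf False Cons.prems(2)
      by (auto simp: valid_force_def)
    then have ab: "a = u0" "b = v0" using Cons.prems(5) by blast+
    show ?thesis
    proof (cases "(x,v0) = (a,b)")
      case True then show ?thesis using ab by simp
    next
      case False
      then have "(x,v0) \<in> set fs" using Cons.prems p by auto
      then have "v0 \<notin> insert b T" by (rule seq_forced_notin[OF rest])
      then show ?thesis using ab by simp
    qed
  qed
qed

lemma fwd_core:
  assumes G: "simple_graph V E" and LV: "L \<subseteq> V"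
    and Okdef: "\<forall>u w. Ok u w \<longleftrightarrow> u \<notin> L \<and> (u,w) \<notin> P"
    and seq: "forcing_seq V E Ok B fs"
    and trm: "\<not>(\<exists>u w. valid_force V E Ok (final_blue B fs) u w)"
    and Pc: "\<forall>(a,b)\<in>P. b \<notin> final_blue B fs \<and> E a b"
    and Pf: "finite P"
    and ne: "final_blue B fs \<noteq> V"
  shows "\<exists>F. F \<subseteq> graph_edges V E \<and> card F \<le> card L + card P \<and> \<not> forces_all V E (\<lambda>u w. {u,w} \<notin> F) B"
proof -
  define S where "S = final_blue B fs"
  define uq where "uq x w \<longleftrightarrow> w \<in> V \<and> w \<notin> S \<and> E x w \<and> (\<forall>y\<in>V. E x y \<and> y \<notin> S \<longrightarrow> y = w)" for x w
  have uqU: "uq x w' \<Longrightarrow> uq x w \<Longrightarrow> w' = w" for x w w'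
    unfolding uq_def by blast
  define FL where "FL = {{x,w} | x w. x \<in> L \<and> x \<in> S \<and> uq x w}"
  define FP where "FP = (\<lambda>(a,b). {a,b}) ` P"
  define F where "F = FL \<union> FP"
  have finV: "finite V" using G by (simp add: simple_graph_def)
  have FLsub: "FL \<subseteq> (\<lambda>x. {x, THE w. uq x w}) ` L"
  proof
    fix e assume "e \<in> FL"
    then obtain x w where e: "e = {x,w}" "x \<in> L" "uq x w" unfolding FL_def by blast
    have "(THE w. uq x w) = w" using e(3) by (rule the_equality) (rule uqU[OF _ e(3)])
    then have "e = (\<lambda>x. {x, THE w. uq x w}) x" using e(1) by simp
    then show "e \<in> (\<lambda>x. {x, THE w. uq x w}) ` L" using e(2) by blast
  qed
  have finL: "finite L" using LV finV finite_subset by blast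
  have cFL: "card FL \<le> card L"
    using card_mono[OF finite_imageI[OF finL] FLsub] card_image_le[OF finL, of "\<lambda>x. {x, THE w. uq x w}"] by linarith
  have cFP: "card FP \<le> card P" unfolding FP_def using card_image_le[OF Pf] .
  have cF: "card F \<le> card L + card P" unfolding F_def using card_Un_le[of FL FP] cFL cFP by linarith
  have FLe: "FL \<subseteq> graph_edges V E"
  proof
    fix e assume "e \<in> FL"
    then obtain x w where e: "e = {x,w}" "x \<in> L" "uq x w" unfolding FL_def by blast
    then have "x \<in> V" "w \<in> V" "E x w" using LV unfolding uq_def by auto
    then show "e \<in> graph_edges V E" unfolding graph_edges_def using e(1) by blast
  qed
  have FPe: "FP \<subseteq> graph_edges V E"
  proof
    fix e assume "e \<in> FP"
    then obtain a b where e: "e = {a,b}" "(a,b) \<in> P" unfolding FP_def by auto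
    then have "E a b" using Pc by blast
    then have "a \<in> V" "b \<in> V" using G by (auto simp: simple_graph_def)
    then show "e \<in> graph_edges V E" unfolding graph_edges_def using e \<open>E a b\<close> by blast
  qed
  have Fsub: "F \<subseteq> graph_edges V E" using FLe FPe F_def by auto
  have Fwhite: "\<exists>z\<in>e. z \<notin> S" if eF: "e \<in> F" for e
  proof (cases "e \<in> FL")
    case True
    then obtain x w where e: "e = {x,w}" "uq x w" unfolding FL_def by blast
    then have "w \<notin> S" unfolding uq_def by simp
    then show ?thesis using e(1) by blast
  next
    case False
    then have "e \<in> FP" using eF unfolding F_def by blast
    then obtain a b where e: "e = {a,b}" "(a,b) \<in> P" unfolding FP_def by auto
    then have "b \<notin> S" using Pc unfolding S_def by blast
    then show ?thesis using e(1) by blast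
  qed
  have "\<forall>(u,w)\<in>set fs. {u,w} \<notin> F"
  proof clarify
    fix u w assume uw: "(u,w) \<in> set fs" and eF: "{u,w} \<in> F"
    have "u \<in> S" "w \<in> S" using seq_edge[OF seq uw] unfolding S_def by simp_all
    moreover obtain z where "z \<in> {u,w}" "z \<notin> S" using Fwhite[OF eF] by blast
    ultimately show False by blast
  qed
  then have seqF: "forcing_seq V E (\<lambda>u w. {u,w} \<notin> F) B fs" using seq_mono[OF seq] by blast
  have termF: "\<not>(\<exists>u w. valid_force V E (\<lambda>u w. {u,w} \<notin> F) S u w)"
  proof
    assume "\<exists>u w. valid_force V E (\<lambda>u w. {u,w} \<notin> F) S u w"
    then obtain u w where vf: "valid_force V E (\<lambda>u w. {u,w} \<notin> F) S u w" by blast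
    then have uqw: "uq u w" and uS: "u \<in> S" and nF: "{u,w} \<notin> F"
      unfolding valid_force_def uq_def by auto
    show False
    proof (cases "u \<in> L")
      case True
      then have "{u,w} \<in> FL" unfolding FL_def using uqw uS by blast
      then show False using nF F_def by auto
    next
      case uL: False
      show False
      proof (cases "(u,w) \<in> P")
        case True
        then have "{u,w} \<in> FP" unfolding FP_def by (rule rev_image_eqI) simp
        then show False using nF F_def by auto
      next
        case False
        then have "Ok u w" using Okdef uL by simp
        then have "valid_force V E Ok S u w" using vf unfolding valid_force_def by simp
        then show False using trm unfolding S_def by blast
      qed
    qed
  qed
  have "\<not> forces_all V E (\<lambda>u w. {u,w} \<notin> F) B"
    unfolding forces_all_def using seqF termF ne unfolding S_def by blast
  then show ?thesis using Fsub cF by blast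
qed

theorem theorem2p3:
  fixes V :: "'a set" and E :: "'a \<Rightarrow> 'a \<Rightarrow> bool" and B :: "'a set" and l :: nat
  assumes "simple_graph V E" and "B \<subseteq> V" and "l \<ge> 1"
  shows "edge_leaky_forcing_set V E l B \<longleftrightarrow>
    (leaky_forcing_set V E (l - 1) B \<and>
     (\<forall>L. L \<subseteq> V \<and> card L = l - 1 \<longrightarrow>
        (\<forall>v \<in> V - B. \<exists>x y. (x, v) \<in> forces_set V E L B \<and> (y, v) \<in> forces_set V E L B \<and> x \<noteq> y)))"
proof
  note G = assms(1)
  have finV: "finite V" using G by (simp add: simple_graph_def)
  assume EL: "edge_leaky_forcing_set V E l B"
  have P1: "leaky_forcing_set V E (l - 1) B"
    unfolding leaky_forcing_set_def
  proof (intro allI impI)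
    fix L assume L: "L \<subseteq> V \<and> card L \<le> l - 1"
    show "forces_all V E (\<lambda>u w. u \<notin> L) B"
    proof (rule ccontr)
      assume "\<not> forces_all V E (\<lambda>u w. u \<notin> L) B"
      then obtain fs where fs: "forcing_seq V E (\<lambda>u w. u \<notin> L) B fs"
        "\<not>(\<exists>u w. valid_force V E (\<lambda>u w. u \<notin> L) (final_blue B fs) u w)"
        "final_blue B fs \<noteq> V"
        unfolding forces_all_def by blast
      have LV: "L \<subseteq> V" using L by simp
      have Okd: "\<forall>u w. (\<lambda>u w. u \<notin> L) u w \<longleftrightarrow> u \<notin> L \<and> (u,w) \<notin> ({}::('a\<times>'a) set)" by simp
      have Pc0: "\<forall>(a,b)\<in>({}::('a\<times>'a) set). b \<notin> final_blue B fs \<and> E a b" by simp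
      obtain F where F: "F \<subseteq> graph_edges V E" "card F \<le> card L + card ({}::('a\<times>'a) set)"
        "\<not> forces_all V E (\<lambda>u w. {u,w} \<notin> F) B"
        using fwd_core[OF G LV Okd fs(1) fs(2) Pc0 finite.emptyI fs(3)] by blast
      have cL: "card L \<le> l - 1" using L by simp
      have "card F \<le> l" using F(2) cL by simp
      then have "forces_all V E (\<lambda>u w. {u,w} \<notin> F) B"
        using EL F(1) unfolding edge_leaky_forcing_set_def by blast
      then show False using F(3) by simp
    qed
  qed
  have P2: "\<forall>L. L \<subseteq> V \<and> card L = l - 1 \<longrightarrow>
        (\<forall>v \<in> V - B. \<exists>x y. (x, v) \<in> forces_set V E L B \<and> (y, v) \<in> forces_set V E L B \<and> x \<noteq> y)"
  proof (intro allI impI ballI)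
    fix L v assume L: "L \<subseteq> V \<and> card L = l - 1" and v: "v \<in> V - B"
    show "\<exists>x y. (x, v) \<in> forces_set V E L B \<and> (y, v) \<in> forces_set V E L B \<and> x \<noteq> y"
    proof (rule ccontr)
      assume nd: "\<not> ?thesis"
      define P where "P = {(y,v) | y. (y,v) \<in> forces_set V E L B}"
      have sub: "p = q" if pP: "p \<in> P" and qP: "q \<in> P" for p q
      proof -
        obtain a where a: "p = (a,v)" "(a,v) \<in> forces_set V E L B" using pP unfolding P_def by blast
        obtain c where c: "q = (c,v)" "(c,v) \<in> forces_set V E L B" using qP unfolding P_def by blast
        have "a = c" using nd a(2) c(2) by blast
        then show ?thesis using a c by simp
      qed
      have "P = {} \<or> (\<exists>p. P = {p})"
      proof (cases "P = {}")
        case False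
        then obtain p where p: "p \<in> P" by blast
        then have "P = {p}" using sub by blast
        then show ?thesis by blast
      qed simp
      then have Pf: "finite P" and Pc: "card P \<le> 1" by auto
      obtain fs where fs: "forcing_seq V E (\<lambda>u w. u \<notin> L \<and> w \<noteq> v) B fs"
        "\<not>(\<exists>u w. valid_force V E (\<lambda>u w. u \<notin> L \<and> w \<noteq> v) (final_blue B fs) u w)"
        using exists_max[OF finV] by blast
      define S where "S = final_blue B fs"
      have vS: "v \<notin> S"
      proof
        assume "v \<in> S"
        then obtain x where "(x,v) \<in> set fs" using v unfolding S_def final_blue_def by force
        then show False using seq_edge[OF fs(1)] by blast
      qed
      define Ok where "Ok = (\<lambda>u w. u \<notin> L \<and> (u,w) \<notin> P)"
      have Okdef: "\<forall>u w. Ok u w \<longleftrightarrow> u \<notin> L \<and> (u,w) \<notin> P" unfolding Ok_def by simp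
      have "\<forall>(u,w)\<in>set fs. Ok u w"
      proof clarify
        fix u w assume "(u,w) \<in> set fs"
        then show "Ok u w" using seq_edge[OF fs(1), of u w] unfolding Ok_def P_def by auto
      qed
      then have seq: "forcing_seq V E Ok B fs" using seq_mono[OF fs(1)] by blast
      have "\<forall>(u,w)\<in>set fs. u \<notin> L"
      proof clarify
        fix u w assume "(u,w) \<in> set fs" "u \<in> L"
        then show False using seq_edge[OF fs(1), of u w] by simp
      qed
      then have seqL: "forcing_seq V E (\<lambda>u w. u \<notin> L) B fs"
        using seq_mono[OF fs(1)] by blast
      have trm: "\<not>(\<exists>u w. valid_force V E Ok S u w)"
      proof
        assume "\<exists>u w. valid_force V E Ok S u w"
        then obtain u w where vf: "valid_force V E Ok S u w" by blast
        show False
        proof (cases "w = v")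
          case False
          then have "valid_force V E (\<lambda>u w. u \<notin> L \<and> w \<noteq> v) S u w"
            using vf unfolding valid_force_def Ok_def by auto
          then show False using fs(2) S_def by blast
        next
          case True
          have vfL: "valid_force V E (\<lambda>u w. u \<notin> L) S u v"
            using vf True unfolding valid_force_def Ok_def by auto
          have "forcing_seq V E (\<lambda>u w. u \<notin> L) B (fs @ [(u,v)])"
            using seqL vfL unfolding S_def by (simp add: seq_append)
          moreover have "(u,v) \<in> set (fs @ [(u,v)])" by simp
          ultimately have "(u,v) \<in> forces_set V E L B" unfolding forces_set_def by blast
          then have "(u,w) \<in> P" unfolding P_def using True by blast
          then show False using vf unfolding valid_force_def Ok_def by simp
        qed
      qed
      have Pc2: "\<forall>(a,b)\<in>P. b \<notin> final_blue B fs \<and> E a b"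
      proof clarify
        fix a b assume "(a,b) \<in> P"
        then have b: "b = v" and "(a,v) \<in> forces_set V E L B" unfolding P_def by auto
        then obtain gs where gs: "forcing_seq V E (\<lambda>u w. u \<notin> L) B gs" "(a,v) \<in> set gs"
          unfolding forces_set_def by blast
        have "E a v" using seq_edge[OF gs(1) gs(2)] by simp
        then show "b \<notin> final_blue B fs \<and> E a b" using b vS S_def by simp
      qed
      have trm': "\<not>(\<exists>u w. valid_force V E Ok (final_blue B fs) u w)" using trm S_def by simp
      have ne: "final_blue B fs \<noteq> V" using vS v S_def by auto
      have LV: "L \<subseteq> V" using L by simp
      obtain F where F: "F \<subseteq> graph_edges V E" "card F \<le> card L + card P"
        "\<not> forces_all V E (\<lambda>u w. {u,w} \<notin> F) B"
        using fwd_core[OF G LV Okdef seq trm' Pc2 Pf ne] by blast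
      have "card F \<le> l" using F(2) L Pc assms(3) by linarith
      then show False using EL F unfolding edge_leaky_forcing_set_def by blast
    qed
  qed
  show "leaky_forcing_set V E (l - 1) B \<and>
     (\<forall>L. L \<subseteq> V \<and> card L = l - 1 \<longrightarrow>
        (\<forall>v \<in> V - B. \<exists>x y. (x, v) \<in> forces_set V E L B \<and> (y, v) \<in> forces_set V E L B \<and> x \<noteq> y))"
    using P1 P2 by blast
next
  note G = assms(1)
  have finV: "finite V" using G by (simp add: simple_graph_def)
  assume R: "leaky_forcing_set V E (l - 1) B \<and>
     (\<forall>L. L \<subseteq> V \<and> card L = l - 1 \<longrightarrow>
        (\<forall>v \<in> V - B. \<exists>x y. (x, v) \<in> forces_set V E L B \<and> (y, v) \<in> forces_set V E L B \<and> x \<noteq> y))"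
  then have LK: "leaky_forcing_set V E (l - 1) B" and DF: "\<forall>L. L \<subseteq> V \<and> card L = l - 1 \<longrightarrow>
        (\<forall>v \<in> V - B. \<exists>x y. (x, v) \<in> forces_set V E L B \<and> (y, v) \<in> forces_set V E L B \<and> x \<noteq> y)"
    by blast+
  show "edge_leaky_forcing_set V E l B"
    unfolding edge_leaky_forcing_set_def
  proof (intro allI impI)
    fix F assume F: "F \<subseteq> graph_edges V E \<and> card F \<le> l"
    have "graph_edges V E \<subseteq> Pow V" unfolding graph_edges_def by auto
    then have finF: "finite F" using F finV by (meson finite_Pow_iff finite_subset)
    show "forces_all V E (\<lambda>u w. {u,w} \<notin> F) B"
      unfolding forces_all_def
    proof (intro allI impI)
      fix fs assume fsa: "forcing_seq V E (\<lambda>u w. {u,w} \<notin> F) B fs \<and>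
          (\<nexists>u w. valid_force V E (\<lambda>u w. {u,w} \<notin> F) (final_blue B fs) u w)"
      then have seq: "forcing_seq V E (\<lambda>u w. {u,w} \<notin> F) B fs"
        and trm: "\<nexists>u w. valid_force V E (\<lambda>u w. {u,w} \<notin> F) (final_blue B fs) u w" by blast+
      define S where "S = final_blue B fs"
      have SV: "S \<subseteq> V" using seq_in_V[OF seq assms(2)] S_def by simp
      have BS: "B \<subseteq> S" unfolding S_def by (rule fb_sub)
      show "final_blue B fs = V"
      proof (rule ccontr)
        assume ne: "final_blue B fs \<noteq> V"
        define uq where "uq x w \<longleftrightarrow> w \<in> V \<and> w \<notin> S \<and> E x w \<and> (\<forall>y\<in>V. E x y \<and> y \<notin> S \<longrightarrow> y = w)" for x w
        define St where "St = {u \<in> S. \<exists>w. uq u w}"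
        have uq_unique: "uq x w \<Longrightarrow> uq x w' \<Longrightarrow> w = w'" for x w w' unfolding uq_def by blast
        have StV: "St \<subseteq> V" using SV St_def by auto
        have finSt: "finite St" using StV finV finite_subset by blast
        have noforce: "\<forall>(u,w)\<in>set fs. u \<notin> St"
        proof clarify
          fix u w assume uw: "(u,w) \<in> set fs" and "u \<in> St"
          then obtain w' where "uq u w'" unfolding St_def by blast
          then have "w' \<in> V" "E u w'" "w' \<notin> S" unfolding uq_def by auto
          moreover have "w' \<in> final_blue B fs" using seq_forcer_nbrs[OF seq uw] \<open>w' \<in> V\<close> \<open>E u w'\<close> by blast
          ultimately show False by (simp add: S_def)
        qed
        have stuckF: "{u,w} \<in> F" if "u \<in> St" "uq u w" for u w
        proof (rule ccontr)
          assume "{u,w} \<notin> F"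
          then have "valid_force V E (\<lambda>u w. {u,w} \<notin> F) S u w"
            using that unfolding valid_force_def uq_def St_def by auto
          then show False using trm by (simp add: S_def)
        qed
        define g where "g u = {u, THE w. uq u w}" for u
        have gth: "uq u w \<Longrightarrow> g u = {u,w}" for u w
        proof -
          assume a: "uq u w"
          have "(THE w. uq u w) = w" using a by (rule the_equality) (metis a uq_unique)
          then show ?thesis unfolding g_def by simp
        qed
        have ginj: "inj_on g St"
        proof (rule inj_onI)
          fix u u' assume u: "u \<in> St" and u': "u' \<in> St" and eq: "g u = g u'"
          obtain w where w: "uq u w" using u unfolding St_def by auto
          obtain w' where w': "uq u' w'" using u' unfolding St_def by auto
          have "{u,w} = {u',w'}" using eq gth w w' by simp
          moreover have "u \<noteq> w'" using u w' unfolding St_def uq_def by auto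
          ultimately show "u = u'" by (auto simp: doubleton_eq_iff)
        qed
        have gF: "g ` St \<subseteq> F"
        proof
          fix e assume "e \<in> g ` St"
          then obtain u where u: "u \<in> St" "e = g u" by blast
          then obtain w where "uq u w" unfolding St_def by auto
          then show "e \<in> F" using stuckF u gth by simp
        qed
        have cSt: "card St \<le> l" using card_inj_on_le[OF ginj gF finF] F by linarith
        have vfSt: "z \<in> St \<and> uq z t" if "valid_force V E (\<lambda>u w. u \<notin> L) S z t" for L z t
          using that unfolding valid_force_def St_def uq_def by auto
        show False
        proof (cases "card St \<le> l - 1")
          case True
          then have fa: "forces_all V E (\<lambda>u w. u \<notin> St) B"
            using LK StV unfolding leaky_forcing_set_def by blast
          have seqL: "forcing_seq V E (\<lambda>u w. u \<notin> St) B fs"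
            using seq_mono[OF seq] noforce by blast
          have "\<nexists>u w. valid_force V E (\<lambda>u w. u \<notin> St) (final_blue B fs) u w"
          proof
            assume "\<exists>u w. valid_force V E (\<lambda>u w. u \<notin> St) (final_blue B fs) u w"
            then obtain u w where vf0: "valid_force V E (\<lambda>u w. u \<notin> St) (final_blue B fs) u w" by blast
            then have vf: "valid_force V E (\<lambda>u w. u \<notin> St) S u w" by (simp add: S_def)
            then have "u \<in> St" using vfSt by blast
            then show False using vf unfolding valid_force_def by simp
          qed
          then show False using fa seqL ne unfolding forces_all_def by blast
        next
          case False
          then have cl: "card St = l" using cSt by linarith
          then have "St \<noteq> {}" using assms(3) by auto
          then obtain u0 where u0: "u0 \<in> St" by blast
          then obtain w0 where w0: "uq u0 w0" unfolding St_def by auto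
          define L where "L = St - {u0}"
          have cL: "card L = l - 1" using cl u0 finSt L_def by simp
          have LV: "L \<subseteq> V" using StV L_def by auto
          have w0V: "w0 \<in> V - B" using w0 BS unfolding uq_def by auto
          obtain x y where xy: "(x, w0) \<in> forces_set V E L B" "(y, w0) \<in> forces_set V E L B" "x \<noteq> y"
            using DF[rule_format, of L w0] LV cL w0V by blast
          have cond: "\<forall>z t. valid_force V E (\<lambda>u w. u \<notin> L) S z t \<longrightarrow> z = u0 \<and> t = w0"
          proof (intro allI impI)
            fix z t assume vf: "valid_force V E (\<lambda>u w. u \<notin> L) S z t"
            then have "z \<in> St" "uq z t" using vfSt by blast+
            moreover have "z \<notin> L" using vf unfolding valid_force_def by simp
            ultimately have "z = u0" unfolding L_def by simp
            then show "z = u0 \<and> t = w0" using uq_unique[of u0 t w0] \<open>uq z t\<close> w0 by simp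
          qed
          have w0S: "w0 \<notin> S" using w0 unfolding uq_def by simp
          have "x = u0"
          proof -
            obtain gs where gs: "forcing_seq V E (\<lambda>u w. u \<notin> L) B gs" "(x,w0) \<in> set gs"
              using xy(1) unfolding forces_set_def by blast
            show ?thesis by (rule exit_force[OF gs(1) BS gs(2) w0S cond])
          qed
          moreover have "y = u0"
          proof -
            obtain gs where gs: "forcing_seq V E (\<lambda>u w. u \<notin> L) B gs" "(y,w0) \<in> set gs"
              using xy(2) unfolding forces_set_def by blast
            show ?thesis by (rule exit_force[OF gs(1) BS gs(2) w0S cond])
          qed
          ultimately show False using xy(3) by simp
        qed
      qed
    qed
  qed
qed

end
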